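(* Let $\mathbf{A}\in\mathbb{Z}^{r\times n}$ be a fixed matrix whose entries are bounded in absolute value by $\mathrm{poly}(n)$, and let $s\ge1$. Then there is a matrix $\mathbf{A}'\in\mathbb{Z}^{r\times n}$, obtained from $\mathbf{A}$ by zeroing out at most $O(rs\log n)$ columns, such that $|\mathrm{Frac}(\mathbf{y}^\top\mathbf{A}')_j|^2\le\frac1s\|\mathrm{Frac}(\mathbf{y}^\top\mathbf{A}')\|_2^2$ for all $\mathbf{y}\in\mathbb{R}^r$ and all $j\in[n]$.
   Context: For $x\in\mathbb{R}$, $\mathrm{Frac}(x)=x-\mathrm{int}(x)\in(-\tfrac12,\tfrac12]$, where $\mathrm{int}(x)$ is the integer closest to $x$; for a vector, $\mathrm{Frac}$ is applied coordinatewise. *)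

theory Defs
  imports Complex_Main
begin

text \<open>int(x): nearest integer, ties broken so that Frac(x) lies in (-1/2, 1/2].\<close>
definition nint :: "real \<Rightarrow> int" where
  "nint x = \<lceil>x - 1/2\<rceil>"

definition Frac :: "real \<Rightarrow> real" where
  "Frac x = x - real_of_int (nint x)"

definition vecmat :: "nat \<Rightarrow> (nat \<Rightarrow> real) \<Rightarrow> (nat \<Rightarrow> nat \<Rightarrow> int) \<Rightarrow> nat \<Rightarrow> real" where
  "vecmat r y A j = (\<Sum>i<r. y i * real_of_int (A i j))"

definition zero_cols :: "(nat \<Rightarrow> nat \<Rightarrow> int) \<Rightarrow> nat set \<Rightarrow> nat \<Rightarrow> nat \<Rightarrow> int" where
  "zero_cols A S = (\<lambda>i j. if j \<in> S then 0 else A i j)"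

end

theory Submission
  imports Defs "HOL-Library.FuncSet"
begin

lemma Frac_bounds: "-1/2 < Frac x \<and> Frac x \<le> 1/2"
proof -
  have "x - 1/2 \<le> of_int \<lceil>x - 1/2\<rceil>" by (rule le_of_int_ceiling)
  moreover have "of_int \<lceil>x - 1/2\<rceil> < x - 1/2 + 1" by linarith
  ultimately show ?thesis unfolding Frac_def nint_def by linarith
qed

lemma Frac_int_shift: "Frac (x + of_int m) = Frac x"
proof -
  have "\<lceil>x + of_int m - 1/2\<rceil> = \<lceil>x - 1/2\<rceil> + m"
    by (metis add.commute add_diff_eq ceiling_add_of_int)
  then show ?thesis unfolding Frac_def nint_def by simp
qed

lemma Frac_Ints: "x - y \<in> \<int> \<Longrightarrow> Frac x = Frac y"
proof -
  assume "x - y \<in> \<int>"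
  then obtain m where "x - y = of_int m" by (auto elim: Ints_cases)
  then have "x = y + of_int m" by simp
  then show ?thesis using Frac_int_shift by simp
qed

lemma Frac_min: "\<bar>Frac x\<bar> \<le> \<bar>x - of_int m\<bar>"
proof -
  define k where "k = nint x - m"
  have xm: "x - of_int m = Frac x + of_int k" unfolding k_def Frac_def by simp
  have b: "-1/2 < Frac x \<and> Frac x \<le> 1/2" by (rule Frac_bounds)
  show ?thesis
  proof (cases "k = 0")
    case True then show ?thesis using xm by simp
  next
    case False
    then have "\<bar>real_of_int k\<bar> \<ge> 1" by linarith
    then show ?thesis using xm b by linarith
  qed
qed

lemma Frac_zero: "Frac 0 = 0"
proof -
  have "\<lceil>- (1/2::real)\<rceil> = 0" by (simp add: ceiling_eq_iff)
  then show ?thesis unfolding Frac_def nint_def by simp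
qed

lemma Frac_small: "\<bar>x\<bar> \<le> 1/2 \<Longrightarrow> \<bar>Frac x\<bar> = \<bar>x\<bar>"
proof -
  assume a: "\<bar>x\<bar> \<le> 1/2"
  have "\<bar>Frac x\<bar> \<le> \<bar>x\<bar>" using Frac_min[of x 0] by simp
  moreover have "\<bar>x\<bar> \<le> \<bar>Frac x\<bar>"
  proof (cases "nint x = 0")
    case True then show ?thesis by (simp add: Frac_def)
  next
    case False
    then have "\<bar>real_of_int (nint x)\<bar> \<ge> 1" by linarith
    then show ?thesis using a unfolding Frac_def by linarith
  qed
  ultimately show ?thesis by simp
qed

lemma Frac_abs_le: "\<bar>Frac x\<bar> \<le> \<bar>x\<bar>"
  using Frac_min[of x 0] by simp

lemma Frac_sub: "\<bar>Frac (x + y)\<bar> \<le> \<bar>Frac x\<bar> + \<bar>Frac y\<bar>"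
proof -
  have "\<bar>Frac (x + y)\<bar> \<le> \<bar>x + y - of_int (nint x + nint y)\<bar>" by (rule Frac_min)
  also have "\<dots> = \<bar>Frac x + Frac y\<bar>" by (simp add: Frac_def)
  finally show ?thesis by linarith
qed

lemma Frac_neg: "\<bar>Frac (- x)\<bar> = \<bar>Frac x\<bar>"
proof -
  have "\<bar>Frac (- x)\<bar> \<le> \<bar>- x - of_int (- nint x)\<bar>" by (rule Frac_min)
  also have "\<dots> = \<bar>Frac x\<bar>" by (simp add: Frac_def)
  finally have 1: "\<bar>Frac (- x)\<bar> \<le> \<bar>Frac x\<bar>" .
  have "\<bar>Frac x\<bar> \<le> \<bar>x - of_int (- nint (-x))\<bar>" by (rule Frac_min)
  also have "\<dots> = \<bar>Frac (-x)\<bar>" by (simp add: Frac_def)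
  finally show ?thesis using 1 by linarith
qed

lemma Frac_par: "(Frac (x+y))\<^sup>2 + (Frac (x-y))\<^sup>2 \<le> 2*(Frac x)\<^sup>2 + 2*(Frac y)\<^sup>2"
proof -
  have "\<bar>Frac (x + y)\<bar> \<le> \<bar>x + y - of_int (nint x + nint y)\<bar>" by (rule Frac_min)
  also have "\<dots> = \<bar>Frac x + Frac y\<bar>" by (simp add: Frac_def)
  finally have 1: "(Frac (x+y))\<^sup>2 \<le> (Frac x + Frac y)\<^sup>2"
    by (metis abs_ge_zero power2_abs power_mono)
  have "\<bar>Frac (x - y)\<bar> \<le> \<bar>x - y - of_int (nint x - nint y)\<bar>" by (rule Frac_min)
  also have "\<dots> = \<bar>Frac x - Frac y\<bar>" by (simp add: Frac_def)
  finally have 2: "(Frac (x-y))\<^sup>2 \<le> (Frac x - Frac y)\<^sup>2"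
    by (metis abs_ge_zero power2_abs power_mono)
  have "(Frac x + Frac y)\<^sup>2 + (Frac x - Frac y)\<^sup>2 = 2*(Frac x)\<^sup>2 + 2*(Frac y)\<^sup>2"
    by (simp add: power2_eq_square algebra_simps)
  then show ?thesis using 1 2 by linarith
qed

lemma Frac_mult: "(Frac (real m * x))\<^sup>2 \<le> (real m)\<^sup>2 * (Frac x)\<^sup>2"
proof -
  have "\<bar>Frac (real m * x)\<bar> \<le> \<bar>real m * x - of_int (int m * nint x)\<bar>" by (rule Frac_min)
  also have "\<dots> = \<bar>real m * Frac x\<bar>" by (simp add: Frac_def algebra_simps)
  also have "\<dots> = real m * \<bar>Frac x\<bar>" by (simp add: abs_mult)
  finally have "(Frac (real m * x))\<^sup>2 \<le> (real m * \<bar>Frac x\<bar>)\<^sup>2"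
    by (metis abs_ge_zero power2_abs power_mono)
  then show ?thesis by (simp add: power_mult_distrib)
qed

lemma Frac_mult_exact:
  assumes "real m * \<bar>Frac x\<bar> \<le> 1/2"
  shows "\<bar>Frac (real m * x)\<bar> = real m * \<bar>Frac x\<bar>"
proof -
  have "real m * x = real m * Frac x + of_int (int m * nint x)" by (simp add: Frac_def algebra_simps)
  then have "Frac (real m * x) = Frac (real m * Frac x)" using Frac_int_shift by metis
  moreover have "\<bar>real m * Frac x\<bar> \<le> 1/2" using assms by (simp add: abs_mult)
  ultimately show ?thesis using Frac_small by (simp add: abs_mult)
qed

lemma gain_lemma:
  fixes G :: "'a set" and g h :: "'a \<Rightarrow> real"
  assumes fin: "finite G"
    and inj1: "inj_on \<sigma> G" and im1: "\<sigma> ` G \<subseteq> G"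
    and inj2: "inj_on \<sigma>' G" and im2: "\<sigma>' ` G \<subseteq> G"
    and gnn: "\<And>z. z \<in> G \<Longrightarrow> g z \<ge> 0"
    and alpha: "\<alpha> > 0"
    and gpt: "\<And>z. z \<in> G \<Longrightarrow> \<alpha> * g z \<le> (g (\<sigma> z) + g (\<sigma>' z)) / 2"
    and tau: "\<tau> \<ge> 0"
    and hsh: "\<And>z. z \<in> G \<Longrightarrow> h z < \<tau>/2 \<Longrightarrow> h (\<sigma> z) \<ge> \<tau>/2 \<and> h (\<sigma>' z) \<ge> \<tau>/2"
  shows "(\<Sum>z\<in>G. g z * (h z)\<^sup>2) \<ge> (\<tau>/2)\<^sup>2 * (\<alpha> / (1 + \<alpha>)) * (\<Sum>z\<in>G. g z)"
proof -
  define E where "E = {z\<in>G. h z < \<tau>/2}"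
  define X where "X = (\<Sum>z\<in>G - E. g z)"
  define V where "V = (\<Sum>z\<in>G. g z)"
  have EG: "E \<subseteq> G" unfolding E_def by auto
  have finE: "finite E" using fin EG finite_subset by blast
  have VX: "V = (\<Sum>z\<in>E. g z) + X" unfolding V_def X_def
    by (metis EG fin sum.subset_diff add.commute)
  have s1: "\<sigma> ` E \<subseteq> G - E"
  proof
    fix w assume "w \<in> \<sigma> ` E"
    then obtain z where z: "z \<in> E" "w = \<sigma> z" by auto
    then have "z \<in> G" "h z < \<tau>/2" unfolding E_def by auto
    then show "w \<in> G - E" using hsh im1 z unfolding E_def by fastforce
  qed
  have s2: "\<sigma>' ` E \<subseteq> G - E"
  proof
    fix w assume "w \<in> \<sigma>' ` E"
    then obtain z where z: "z \<in> E" "w = \<sigma>' z" by auto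
    then have "z \<in> G" "h z < \<tau>/2" unfolding E_def by auto
    then show "w \<in> G - E" using hsh im2 z unfolding E_def by fastforce
  qed
  have a1: "(\<Sum>z\<in>E. g (\<sigma> z)) \<le> X"
  proof -
    have "(\<Sum>z\<in>E. g (\<sigma> z)) = (\<Sum>w\<in>\<sigma> ` E. g w)"
      using sum.reindex[of \<sigma> E g] inj_on_subset[OF inj1 EG] by simp
    also have "\<dots> \<le> X" unfolding X_def
      by (rule sum_mono2) (use fin s1 gnn in auto)
    finally show ?thesis .
  qed
  have a2: "(\<Sum>z\<in>E. g (\<sigma>' z)) \<le> X"
  proof -
    have "(\<Sum>z\<in>E. g (\<sigma>' z)) = (\<Sum>w\<in>\<sigma>' ` E. g w)"
      using sum.reindex[of \<sigma>' E g] inj_on_subset[OF inj2 EG] by simp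
    also have "\<dots> \<le> X" unfolding X_def
      by (rule sum_mono2) (use fin s2 gnn in auto)
    finally show ?thesis .
  qed
  have "\<alpha> * (\<Sum>z\<in>E. g z) = (\<Sum>z\<in>E. \<alpha> * g z)" by (simp add: sum_distrib_left)
  also have "\<dots> \<le> (\<Sum>z\<in>E. (g (\<sigma> z) + g (\<sigma>' z)) / 2)"
    by (rule sum_mono) (use gpt EG in auto)
  also have "\<dots> = ((\<Sum>z\<in>E. g (\<sigma> z)) + (\<Sum>z\<in>E. g (\<sigma>' z))) / 2"
    by (simp add: sum.distrib[symmetric] sum_divide_distrib[symmetric])
  also have "\<dots> \<le> X" using add_mono[OF a1 a2] by simp
  finally have aE: "\<alpha> * (\<Sum>z\<in>E. g z) \<le> X" .
  have "\<alpha> * V \<le> (1 + \<alpha>) * X" using aE VX by (simp add: algebra_simps)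
  then have XV: "(\<alpha> / (1 + \<alpha>)) * V \<le> X" using alpha
    by (simp add: field_simps)
  have "(\<tau>/2)\<^sup>2 * X = (\<Sum>z\<in>G - E. g z * (\<tau>/2)\<^sup>2)" unfolding X_def
    by (simp add: sum_distrib_right mult.commute)
  also have "\<dots> \<le> (\<Sum>z\<in>G - E. g z * (h z)\<^sup>2)"
  proof (rule sum_mono)
    fix z assume z: "z \<in> G - E"
    then have "h z \<ge> \<tau>/2" unfolding E_def by auto
    then have "(\<tau>/2)\<^sup>2 \<le> (h z)\<^sup>2" using tau by (intro power_mono) auto
    then show "g z * (\<tau>/2)\<^sup>2 \<le> g z * (h z)\<^sup>2" using gnn z by (intro mult_left_mono) auto
  qed
  also have "\<dots> \<le> (\<Sum>z\<in>G. g z * (h z)\<^sup>2)"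
    by (rule sum_mono2) (use fin gnn in auto)
  finally have "(\<tau>/2)\<^sup>2 * X \<le> (\<Sum>z\<in>G. g z * (h z)\<^sup>2)" .
  moreover have "(\<tau>/2)\<^sup>2 * ((\<alpha> / (1 + \<alpha>)) * V) \<le> (\<tau>/2)\<^sup>2 * X"
    using XV by (intro mult_left_mono) auto
  ultimately show ?thesis unfolding V_def by (simp add: mult.assoc)
qed

lemma amgm: fixes A B u :: real
  assumes "0 \<le> A" "0 \<le> B" "0 \<le> u" "u^2 \<le> A * B" shows "u \<le> (A + B) / 2"
proof -
  have "0 \<le> (A - B)^2" by simp
  then have "A * B \<le> ((A + B)/2)^2" by (simp add: power2_eq_square algebra_simps)
  then have "u^2 \<le> ((A + B)/2)^2" using assms(4) by linarith
  then show ?thesis by (rule power2_le_imp_le) (use assms in simp)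
qed

lemma exp_pair:
  fixes a b q q0 :: real
  assumes "s > 0" "a + b \<le> 2 * q + 2 * q0"
  shows "exp (- q0 / s) * exp (- q / s) \<le> (exp (- a / s) + exp (- b / s)) / 2"
proof (rule amgm)
  have e1: "exp (- a / s) * exp (- b / s) = exp (- a / s + - b / s)" by (rule exp_add[symmetric])
  have e2: "- a / s + - b / s = - (a + b) / s" by (simp add: diff_divide_distrib)
  have e3: "exp (- (2 * q + 2 * q0) / s) \<le> exp (- (a + b) / s)" using assms
    by (intro exp_le_cancel_iff[THEN iffD2]) (simp add: divide_right_mono)
  have 1: "exp (- (2 * q + 2 * q0) / s) \<le> exp (- a / s) * exp (- b / s)" using e1 e2 e3 by simp
  have ex: "- (2 * q + 2 * q0) / s = (- q0 / s + - q / s) + (- q0 / s + - q / s)"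
    using assms by (simp add: field_simps)
  have 2: "exp (- (2 * q + 2 * q0) / s) = (exp (- q0 / s) * exp (- q / s))\<^sup>2"
  proof -
    have "exp ((- q0 / s + - q / s) + (- q0 / s + - q / s)) = (exp (- q0 / s) * exp (- q / s))\<^sup>2"
      by (simp only: exp_add power2_eq_square)
    then show ?thesis using ex by metis
  qed
  show "(exp (- q0 / s) * exp (- q / s))\<^sup>2 \<le> exp (- a / s) * exp (- b / s)"
    using 1 2 by simp
qed auto

lemma vecmat_diff3:
  "vecmat r y A k - (vecmat r y' A k + vecmat r y'' A k) = (\<Sum>i<r. (y i - y' i - y'' i) * real_of_int (A i k))"
  unfolding vecmat_def by (simp add: sum_subtractf[symmetric] sum.distrib[symmetric] algebra_simps)

lemma vecmat_diff3':
  "vecmat r y A k - (vecmat r y' A k - vecmat r y'' A k) = (\<Sum>i<r. (y i - y' i + y'' i) * real_of_int (A i k))"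
  unfolding vecmat_def by (simp add: sum_subtractf[symmetric] sum.distrib[symmetric] algebra_simps)

lemma vecmat_Ints:
  assumes "\<And>i. i < r \<Longrightarrow> y i \<in> \<int>"
  shows "(\<Sum>i<r. y i * real_of_int (A i k)) \<in> \<int>"
  using assms by (intro Ints_sum Ints_mult) auto

lemma div_helper:
  fixes R X Y D m :: real
  assumes "m > 0" "X + Y = R + m * D"
  shows "R / m - X / m - Y / m = - D"
proof -
  have "R - X - Y = - (m * D)" using assms(2) by linarith
  then have "(R - X - Y) / m = - D" using assms(1) by simp
  then show ?thesis by (simp add: diff_divide_distrib)
qed

lemma grid_facts:
  fixes M :: nat and z z0 :: "nat \<Rightarrow> nat"
  assumes M: "M \<ge> 1"
    and z: "z \<in> Pi\<^sub>E {..<r} (\<lambda>_. {..<M})" and z0: "z0 \<in> Pi\<^sub>E {..<r} (\<lambda>_. {..<M})"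
  defines "pt \<equiv> \<lambda>z::nat\<Rightarrow>nat. (\<lambda>i. real (z i) / real M)"
  defines "\<sigma> \<equiv> \<lambda>z. (\<lambda>i\<in>{..<r}. (z i + z0 i) mod M)"
  defines "\<sigma>' \<equiv> \<lambda>z. (\<lambda>i\<in>{..<r}. (z i + (M - z0 i)) mod M)"
  shows "\<sigma> z \<in> Pi\<^sub>E {..<r} (\<lambda>_. {..<M})" "\<sigma>' z \<in> Pi\<^sub>E {..<r} (\<lambda>_. {..<M})"
    "\<sigma>' (\<sigma> z) = z" "\<sigma> (\<sigma>' z) = z"
    "vecmat r (pt (\<sigma> z)) A k - (vecmat r (pt z) A k + vecmat r (pt z0) A k) \<in> \<int>"
    "vecmat r (pt (\<sigma>' z)) A k - (vecmat r (pt z) A k - vecmat r (pt z0) A k) \<in> \<int>"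
proof -
  have Mp: "M > 0" using M by simp
  show "\<sigma> z \<in> Pi\<^sub>E {..<r} (\<lambda>_. {..<M})" unfolding \<sigma>_def using Mp by (simp add: restrict_PiE_iff)
  show "\<sigma>' z \<in> Pi\<^sub>E {..<r} (\<lambda>_. {..<M})" unfolding \<sigma>'_def using Mp by (simp add: restrict_PiE_iff)
  have zi: "z i < M" "z0 i < M" if "i < r" for i using z z0 that by auto
  show "\<sigma>' (\<sigma> z) = z"
  proof (rule PiE_ext[OF _ z])
    show "\<sigma>' (\<sigma> z) \<in> Pi\<^sub>E {..<r} (\<lambda>_. {..<M})" unfolding \<sigma>'_def using Mp by (simp add: restrict_PiE_iff)
    fix i assume i: "i \<in> {..<r}"
    then have "\<sigma>' (\<sigma> z) i = ((z i + z0 i) mod M + (M - z0 i)) mod M" unfolding \<sigma>_def \<sigma>'_def by simp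
    also have "\<dots> = (z i + z0 i + (M - z0 i)) mod M" by (simp add: mod_add_left_eq)
    also have "\<dots> = (z i + M) mod M" using zi[of i] i by simp
    also have "\<dots> = z i" using zi[of i] i by simp
    finally show "\<sigma>' (\<sigma> z) i = z i" .
  qed
  show "\<sigma> (\<sigma>' z) = z"
  proof (rule PiE_ext[OF _ z])
    show "\<sigma> (\<sigma>' z) \<in> Pi\<^sub>E {..<r} (\<lambda>_. {..<M})" unfolding \<sigma>_def using Mp by (simp add: restrict_PiE_iff)
    fix i assume i: "i \<in> {..<r}"
    then have "\<sigma> (\<sigma>' z) i = ((z i + (M - z0 i)) mod M + z0 i) mod M" unfolding \<sigma>_def \<sigma>'_def by simp
    also have "\<dots> = (z i + (M - z0 i) + z0 i) mod M" by (simp add: mod_add_left_eq)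
    also have "\<dots> = (z i + M) mod M" using zi[of i] i by simp
    also have "\<dots> = z i" using zi[of i] i by simp
    finally show "\<sigma> (\<sigma>' z) i = z i" .
  qed
  show "vecmat r (pt (\<sigma> z)) A k - (vecmat r (pt z) A k + vecmat r (pt z0) A k) \<in> \<int>"
    unfolding vecmat_diff3
  proof (rule vecmat_Ints)
    fix i assume i: "i < r"
    define a where "a = z i + z0 i"
    have "a = a mod M + M * (a div M)" by simp
    then have "real a = real (a mod M) + real M * real (a div M)" by (metis of_nat_add of_nat_mult)
    then have "real (a mod M) / real M - real (z i) / real M - real (z0 i) / real M = - real (a div M)"
      using Mp unfolding a_def by (intro div_helper) auto
    then show "pt (\<sigma> z) i - pt z i - pt z0 i \<in> \<int>" using i unfolding pt_def \<sigma>_def a_def by simp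
  qed
  show "vecmat r (pt (\<sigma>' z)) A k - (vecmat r (pt z) A k - vecmat r (pt z0) A k) \<in> \<int>"
    unfolding vecmat_diff3'
  proof (rule vecmat_Ints)
    fix i assume i: "i < r"
    define a where "a = z i + (M - z0 i)"
    have "a = a mod M + M * (a div M)" by simp
    then have "real a = real (a mod M) + real M * real (a div M)" by (metis of_nat_add of_nat_mult)
    moreover have "real a = real (z i) + real M - real (z0 i)" using zi[OF i] unfolding a_def by simp
    ultimately have "real (a mod M) / real M - real (z i) / real M + real (z0 i) / real M = 1 - real (a div M)"
      using Mp by (simp add: field_simps)
    then show "pt (\<sigma>' z) i - pt z i + pt z0 i \<in> \<int>" using i unfolding pt_def \<sigma>'_def a_def by simp
  qed
qed

lemma vecmat_scale: "vecmat r (\<lambda>i. c * y i) A k = c * vecmat r y A k"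
  unfolding vecmat_def by (simp add: sum_distrib_left algebra_simps)

lemma witness:
  fixes n r M :: nat and s B :: real and A :: "nat \<Rightarrow> nat \<Rightarrow> int" and y :: "nat \<Rightarrow> real"
  assumes s1: "s \<ge> 1" and Bpos: "B > 0"
    and Abd: "\<forall>i<r. \<forall>j<n. \<bar>real_of_int (A i j)\<bar> \<le> B"
    and Mpos: "M \<ge> 1" and Mbig: "8 * real n * real r * B \<le> real M"
    and T: "T \<subseteq> {..<n}" and jT: "j \<in> T"
    and viol: "(\<Sum>k\<in>T. (Frac (vecmat r y A k))\<^sup>2) < s * (Frac (vecmat r y A j))\<^sup>2"
  shows "\<exists>z0 \<in> Pi\<^sub>E {..<r} (\<lambda>_. {..<M}).
           \<bar>Frac (vecmat r (\<lambda>i. real (z0 i) / real M) A j)\<bar> \<ge> 1/8 \<and>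
           (\<Sum>k\<in>T. (Frac (vecmat r (\<lambda>i. real (z0 i) / real M) A k))\<^sup>2) \<le> s"
proof -
  have finT: "finite T" using T finite_subset by blast
  have jn: "j < n" using T jT by auto
  then have n1: "real n \<ge> 1" by simp
  define t where "t = \<bar>Frac (vecmat r y A j)\<bar>"
  have Qnn: "(\<Sum>k\<in>T. (Frac (vecmat r y A k))\<^sup>2) \<ge> 0" by (intro sum_nonneg) auto
  have "s * t\<^sup>2 > 0" using viol Qnn unfolding t_def by simp
  then have tpos: "t > 0" unfolding t_def using s1 by (auto simp: zero_less_mult_iff)
  have thalf: "t \<le> 1/2" unfolding t_def using Frac_bounds[of "vecmat r y A j"] by auto
  define m where "m = nat \<lfloor>1 / (2 * t)\<rfloor>"
  have ge1: "1 / (2 * t) \<ge> 1" using tpos thalf by (simp add: field_simps)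
  have m1: "real m \<le> 1 / (2 * t)" unfolding m_def using ge1 by linarith
  have m2: "real m > 1 / (2 * t) - 1" unfolding m_def using ge1 by linarith
  have mge1: "real m \<ge> 1"
  proof -
    have "\<lfloor>1 / (2 * t)\<rfloor> \<ge> 1" using ge1 by (simp add: one_le_floor)
    then show ?thesis unfolding m_def by linarith
  qed
  have mt1: "real m * t \<le> 1/2" using m1 tpos by (simp add: field_simps)
  have "real m * t > (1 / (2 * t) - 1) * t" using m2 tpos by (intro mult_strict_right_mono) auto
  moreover have "(1 / (2 * t) - 1) * t = 1/2 - t" using tpos by (simp add: left_diff_distrib)
  ultimately have mt2': "real m * t > 1/2 - t" by linarith
  have mt2: "real m * t \<ge> 1/4"
  proof (cases "t \<le> 1/4")
    case True then show ?thesis using mt2' by linarith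
  next
    case False then show ?thesis using mge1 tpos
      by (metis dual_order.trans less_eq_real_def mult_le_cancel_right1 not_le)
  qed
  define y1 where "y1 = (\<lambda>i. real m * y i)"
  have vy1: "vecmat r y1 A k = real m * vecmat r y A k" for k
    unfolding y1_def by (rule vecmat_scale)
  have dj1: "\<bar>Frac (vecmat r y1 A j)\<bar> = real m * t"
    unfolding vy1 t_def using mt1 unfolding t_def by (intro Frac_mult_exact) auto
  have Q1: "(\<Sum>k\<in>T. (Frac (vecmat r y1 A k))\<^sup>2) \<le> s / 4"
  proof -
    have "(\<Sum>k\<in>T. (Frac (vecmat r y1 A k))\<^sup>2) \<le> (\<Sum>k\<in>T. (real m)\<^sup>2 * (Frac (vecmat r y A k))\<^sup>2)"
      unfolding vy1 by (intro sum_mono Frac_mult)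
    also have "\<dots> = (real m)\<^sup>2 * (\<Sum>k\<in>T. (Frac (vecmat r y A k))\<^sup>2)" by (simp add: sum_distrib_left)
    also have "\<dots> \<le> (real m)\<^sup>2 * (s * t\<^sup>2)" using viol unfolding t_def
      by (intro mult_left_mono) auto
    also have "\<dots> = s * (real m * t)\<^sup>2" by (simp add: power_mult_distrib)
    also have "\<dots> \<le> s * (1/2)\<^sup>2" using mt1 tpos s1 by (intro mult_left_mono power_mono) auto
    finally show ?thesis by (simp add: power2_eq_square)
  qed
  define z0 where "z0 = (\<lambda>i\<in>{..<r}. nat (\<lfloor>real M * y1 i\<rfloor> mod int M))"
  have Mp: "M > 0" using Mpos by simp
  have z0G: "z0 \<in> Pi\<^sub>E {..<r} (\<lambda>_. {..<M})"
    unfolding z0_def using Mp by (simp add: restrict_PiE_iff nat_less_iff)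
  define pt where "pt = (\<lambda>i. real (z0 i) / real M)"
  define e where "e i = (real M * y1 i - of_int \<lfloor>real M * y1 i\<rfloor>) / real M" for i
  define p where "p i = \<lfloor>real M * y1 i\<rfloor> div int M" for i
  have pti: "pt i = y1 i - e i - of_int (p i)" if "i < r" for i
  proof -
    define F where "F = \<lfloor>real M * y1 i\<rfloor>"
    have Fm: "F mod int M \<ge> 0" using Mp by simp
    have z0i: "z0 i = nat (F mod int M)" unfolding z0_def F_def using that by simp
    have rz: "real (z0 i) = of_int (F mod int M)" unfolding z0i using Fm by simp
    have d: "int M * (F div int M) + F mod int M = F" by (rule mult_div_mod_eq)
    then have "real M * of_int (F div int M) + of_int (F mod int M) = (of_int F :: real)"
      by (metis of_int_add of_int_mult of_int_of_nat_eq)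
    then have rz2: "real (z0 i) = of_int F - real M * of_int (p i)" unfolding rz p_def F_def[symmetric] by linarith
    have ei: "e i = y1 i - of_int F / real M"
      unfolding e_def F_def[symmetric] using Mp by (simp add: diff_divide_distrib)
    have "pt i = (of_int F - real M * of_int (p i)) / real M" unfolding pt_def rz2 ..
    also have "\<dots> = of_int F / real M - of_int (p i)" using Mp by (simp add: diff_divide_distrib)
    finally show ?thesis unfolding ei by simp
  qed
  have e_bd: "0 \<le> e i \<and> e i \<le> 1 / real M" for i
  proof -
    have "0 \<le> real M * y1 i - of_int \<lfloor>real M * y1 i\<rfloor>" by linarith
    moreover have "real M * y1 i - of_int \<lfloor>real M * y1 i\<rfloor> \<le> 1" by linarith
    ultimately show ?thesis unfolding e_def using Mp by (simp add: divide_right_mono)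
  qed
  define E where "E k = (\<Sum>i<r. e i * real_of_int (A i k))" for k
  have eta: "\<bar>E k\<bar> \<le> 1 / (8 * real n)" if "k < n" for k
  proof -
    have "\<bar>E k\<bar> \<le> (\<Sum>i<r. \<bar>e i * real_of_int (A i k)\<bar>)" unfolding E_def by (rule sum_abs)
    also have "\<dots> \<le> (\<Sum>i<r. (1 / real M) * B)"
    proof (rule sum_mono)
      fix i assume "i \<in> {..<r}"
      then have "\<bar>real_of_int (A i k)\<bar> \<le> B" using Abd that by auto
      moreover have "\<bar>e i\<bar> \<le> 1 / real M" using e_bd[of i] by auto
      ultimately have "\<bar>e i\<bar> * \<bar>real_of_int (A i k)\<bar> \<le> (1 / real M) * B"
        by (intro mult_mono) auto
      then show "\<bar>e i * real_of_int (A i k)\<bar> \<le> (1 / real M) * B"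
        by (simp add: abs_mult)
    qed
    also have "\<dots> = real r * B / real M" by simp
    also have "\<dots> \<le> 1 / (8 * real n)"
      using Mbig Mp n1 by (simp add: field_simps)
    finally show ?thesis .
  qed
  have keyk: "Frac (vecmat r pt A k) = Frac (vecmat r y1 A k + - E k)" for k
  proof (rule Frac_Ints)
    have "vecmat r pt A k - (vecmat r y1 A k + - E k) = (\<Sum>i<r. (pt i - y1 i + e i) * real_of_int (A i k))"
      unfolding vecmat_def E_def by (simp add: sum_subtractf[symmetric] sum.distrib[symmetric] algebra_simps)
    also have "\<dots> = (\<Sum>i<r. (- of_int (p i)) * real_of_int (A i k))"
      by (rule sum.cong) (auto simp: pti)
    also have "\<dots> \<in> \<int>" by (intro Ints_sum Ints_mult) auto
    finally show "vecmat r pt A k - (vecmat r y1 A k + - E k) \<in> \<int>" .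
  qed
  have up: "\<bar>Frac (vecmat r pt A k)\<bar> \<le> \<bar>Frac (vecmat r y1 A k)\<bar> + 1 / (8 * real n)" if "k < n" for k
  proof -
    have "\<bar>Frac (vecmat r pt A k)\<bar> \<le> \<bar>Frac (vecmat r y1 A k)\<bar> + \<bar>Frac (- E k)\<bar>"
      unfolding keyk by (rule Frac_sub)
    moreover have "\<bar>Frac (- E k)\<bar> \<le> \<bar>E k\<bar>" using Frac_abs_le[of "- E k"] by simp
    ultimately show ?thesis using eta[OF that] by linarith
  qed
  have lowj: "\<bar>Frac (vecmat r pt A j)\<bar> \<ge> 1/8"
  proof -
    have "vecmat r y1 A j = (vecmat r y1 A j + - E j) + E j" by simp
    then have "\<bar>Frac (vecmat r y1 A j)\<bar> \<le> \<bar>Frac (vecmat r y1 A j + - E j)\<bar> + \<bar>Frac (E j)\<bar>"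
      by (metis Frac_sub)
    moreover have "\<bar>Frac (E j)\<bar> \<le> 1 / (8 * real n)" using Frac_abs_le[of "E j"] eta[OF jn] by linarith
    moreover have "1 / (8 * real n) \<le> 1/8" using n1 by (simp add: field_simps)
    ultimately show ?thesis using dj1 mt2 keyk[of j] by linarith
  qed
  have Qz: "(\<Sum>k\<in>T. (Frac (vecmat r pt A k))\<^sup>2) \<le> s"
  proof -
    define \<eta> where "\<eta> = 1 / (8 * real n)"
    have "(\<Sum>k\<in>T. (Frac (vecmat r pt A k))\<^sup>2) \<le> (\<Sum>k\<in>T. 2 * (Frac (vecmat r y1 A k))\<^sup>2 + 2 * \<eta>\<^sup>2)"
    proof (rule sum_mono)
      fix k assume "k \<in> T"
      then have kn: "k < n" using T by auto
      have a: "\<bar>Frac (vecmat r pt A k)\<bar> \<le> \<bar>Frac (vecmat r y1 A k)\<bar> + \<eta>" using up[OF kn] unfolding \<eta>_def .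
      have "(Frac (vecmat r pt A k))\<^sup>2 \<le> (\<bar>Frac (vecmat r y1 A k)\<bar> + \<eta>)\<^sup>2"
        using a by (metis abs_ge_zero power2_abs power_mono)
      also have "\<dots> \<le> 2 * (Frac (vecmat r y1 A k))\<^sup>2 + 2 * \<eta>\<^sup>2"
      proof -
        have h0: "0 \<le> (\<bar>Frac (vecmat r y1 A k)\<bar> - \<eta>)\<^sup>2" by simp
        have "(\<bar>Frac (vecmat r y1 A k)\<bar> + \<eta>)\<^sup>2 \<le> 2 * \<bar>Frac (vecmat r y1 A k)\<bar>\<^sup>2 + 2 * \<eta>\<^sup>2"
          using h0 unfolding power2_eq_square by (simp add: algebra_simps)
        then show ?thesis by simp
      qed
      finally show "(Frac (vecmat r pt A k))\<^sup>2 \<le> 2 * (Frac (vecmat r y1 A k))\<^sup>2 + 2 * \<eta>\<^sup>2" .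
    qed
    also have "\<dots> = 2 * (\<Sum>k\<in>T. (Frac (vecmat r y1 A k))\<^sup>2) + real (card T) * (2 * \<eta>\<^sup>2)"
      by (simp add: sum.distrib sum_distrib_left)
    also have "\<dots> \<le> 2 * (s / 4) + real n * (2 * \<eta>\<^sup>2)"
    proof -
      have "card T \<le> n" using T by (metis card_lessThan card_mono finite_lessThan)
      then show ?thesis using Q1 by (intro add_mono mult_right_mono) auto
    qed
    also have "real n * (2 * \<eta>\<^sup>2) = 1 / (32 * real n)" unfolding \<eta>_def using n1
      by (simp add: power2_eq_square field_simps)
    also have "1 / (32 * real n) \<le> 1/32" using n1 by (simp add: field_simps)
    finally show ?thesis using s1 by linarith
  qed
  show ?thesis using z0G lowj Qz unfolding pt_def by blast
qed

definition QQ :: "nat \<Rightarrow> (nat \<Rightarrow> nat \<Rightarrow> int) \<Rightarrow> nat set \<Rightarrow> (nat \<Rightarrow> real) \<Rightarrow> real" where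
  "QQ r A T y = (\<Sum>k\<in>T. (Frac (vecmat r y A k))\<^sup>2)"

definition grid :: "nat \<Rightarrow> nat \<Rightarrow> (nat \<Rightarrow> nat) set" where
  "grid r M = Pi\<^sub>E {..<r} (\<lambda>_. {..<M})"

definition ptM :: "nat \<Rightarrow> (nat \<Rightarrow> nat) \<Rightarrow> nat \<Rightarrow> real" where
  "ptM M z = (\<lambda>i. real (z i) / real M)"

definition VV :: "nat \<Rightarrow> nat \<Rightarrow> real \<Rightarrow> (nat \<Rightarrow> nat \<Rightarrow> int) \<Rightarrow> nat set \<Rightarrow> real" where
  "VV r M s A T = (\<Sum>z\<in>grid r M. exp (- QQ r A T (ptM M z) / s))"

lemma QQ_nonneg: "QQ r A T y \<ge> 0"
  unfolding QQ_def by (intro sum_nonneg) auto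

lemma increase:
  assumes s1: "s \<ge> 1" and M: "M \<ge> 1" and finT: "finite T" and jT: "j \<in> T"
    and z0: "z0 \<in> grid r M"
    and hj: "\<bar>Frac (vecmat r (ptM M z0) A j)\<bar> \<ge> 1/8"
    and Qz0: "QQ r A T (ptM M z0) \<le> s"
  shows "VV r M s A (T - {j}) \<ge> (1 + 1 / (1024 * s)) * VV r M s A T"
proof -
  define G where "G = grid r M"
  define \<sigma> where "\<sigma> = (\<lambda>z. (\<lambda>i\<in>{..<r}. (z i + z0 i) mod M))"
  define \<sigma>' where "\<sigma>' = (\<lambda>z. (\<lambda>i\<in>{..<r}. (z i + (M - z0 i)) mod M))"
  define u where "u z k = vecmat r (ptM M z) A k" for z k
  define g where "g z = exp (- QQ r A T (ptM M z) / s)" for z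
  define h where "h z = \<bar>Frac (u z j)\<bar>" for z
  define \<alpha> where "\<alpha> = exp (- QQ r A T (ptM M z0) / s)"
  have sp: "s > 0" using s1 by simp
  have z0': "z0 \<in> Pi\<^sub>E {..<r} (\<lambda>_. {..<M})" using z0 unfolding grid_def .
  have gf1: "\<sigma> z \<in> G" "\<sigma>' z \<in> G" "\<sigma>' (\<sigma> z) = z" "\<sigma> (\<sigma>' z) = z"
     "u (\<sigma> z) k - (u z k + u z0 k) \<in> \<int>" "u (\<sigma>' z) k - (u z k - u z0 k) \<in> \<int>"
    if "z \<in> G" for z k
  proof -
    have zz: "z \<in> Pi\<^sub>E {..<r} (\<lambda>_. {..<M})" using that unfolding G_def grid_def .
    note q = grid_facts[OF M zz z0']
    show "\<sigma> z \<in> G" unfolding \<sigma>_def G_def grid_def by (rule q(1))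
    show "\<sigma>' z \<in> G" unfolding \<sigma>'_def G_def grid_def by (rule q(2))
    show "\<sigma>' (\<sigma> z) = z" unfolding \<sigma>_def \<sigma>'_def by (rule q(3))
    show "\<sigma> (\<sigma>' z) = z" unfolding \<sigma>_def \<sigma>'_def by (rule q(4))
    show "u (\<sigma> z) k - (u z k + u z0 k) \<in> \<int>" unfolding \<sigma>_def u_def ptM_def by (rule q(5))
    show "u (\<sigma>' z) k - (u z k - u z0 k) \<in> \<int>" unfolding \<sigma>'_def u_def ptM_def by (rule q(6))
  qed
  have finG: "finite G" unfolding G_def grid_def by (intro finite_PiE) auto
  have sh1: "Frac (u (\<sigma> z) k) = Frac (u z k + u z0 k)" if "z \<in> G" for z k
    using gf1(5)[OF that] by (rule Frac_Ints)
  have sh2: "Frac (u (\<sigma>' z) k) = Frac (u z k - u z0 k)" if "z \<in> G" for z k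
    using gf1(6)[OF that] by (rule Frac_Ints)
  have gain: "(\<Sum>z\<in>G. g z * (h z)\<^sup>2) \<ge> ((1/8)/2)\<^sup>2 * (\<alpha> / (1 + \<alpha>)) * (\<Sum>z\<in>G. g z)"
  proof (rule gain_lemma[OF finG])
    show "inj_on \<sigma> G" by (rule inj_on_inverseI[where g = \<sigma>']) (use gf1 in auto)
    show "inj_on \<sigma>' G" by (rule inj_on_inverseI[where g = \<sigma>]) (use gf1 in auto)
    show "\<sigma> ` G \<subseteq> G" "\<sigma>' ` G \<subseteq> G" using gf1 by auto
    show "\<And>z. z \<in> G \<Longrightarrow> 0 \<le> g z" unfolding g_def by simp
    show "\<alpha> > 0" unfolding \<alpha>_def by simp
    show "(0::real) \<le> 1/8" by simp
    show "\<alpha> * g z \<le> (g (\<sigma> z) + g (\<sigma>' z)) / 2" if z: "z \<in> G" for z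
    proof -
      have "QQ r A T (ptM M (\<sigma> z)) + QQ r A T (ptM M (\<sigma>' z))
            \<le> 2 * QQ r A T (ptM M z) + 2 * QQ r A T (ptM M z0)"
      proof -
        have "QQ r A T (ptM M (\<sigma> z)) + QQ r A T (ptM M (\<sigma>' z))
            = (\<Sum>k\<in>T. (Frac (u z k + u z0 k))\<^sup>2 + (Frac (u z k - u z0 k))\<^sup>2)"
          unfolding QQ_def sum.distrib[symmetric] using sh1[OF z] sh2[OF z] unfolding u_def by simp
        also have "\<dots> \<le> (\<Sum>k\<in>T. 2 * (Frac (u z k))\<^sup>2 + 2 * (Frac (u z0 k))\<^sup>2)"
          by (intro sum_mono Frac_par)
        also have "\<dots> = 2 * QQ r A T (ptM M z) + 2 * QQ r A T (ptM M z0)"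
          unfolding QQ_def u_def by (simp add: sum.distrib sum_distrib_left)
        finally show ?thesis .
      qed
      then show ?thesis unfolding \<alpha>_def g_def by (intro exp_pair sp)
    qed
    show "h (\<sigma> z) \<ge> 1/8/2 \<and> h (\<sigma>' z) \<ge> 1/8/2" if z: "z \<in> G" and hz: "h z < 1/8/2" for z
    proof
      have hj': "\<bar>Frac (u z0 j)\<bar> \<ge> 1/8" using hj unfolding u_def .
      have "u z0 j = (u z j + u z0 j) + - u z j" by simp
      then have "\<bar>Frac (u z0 j)\<bar> \<le> \<bar>Frac (u z j + u z0 j)\<bar> + \<bar>Frac (- u z j)\<bar>" by (metis Frac_sub)
      then have "\<bar>Frac (u z0 j)\<bar> \<le> h (\<sigma> z) + h z" unfolding h_def sh1[OF z] Frac_neg .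
      then show "h (\<sigma> z) \<ge> 1/8/2" using hj' hz by linarith
      have "u z0 j = - (u z j - u z0 j) + u z j" by simp
      then have "\<bar>Frac (u z0 j)\<bar> \<le> \<bar>Frac (- (u z j - u z0 j))\<bar> + \<bar>Frac (u z j)\<bar>" by (metis Frac_sub)
      then have "\<bar>Frac (u z0 j)\<bar> \<le> h (\<sigma>' z) + h z" unfolding h_def sh2[OF z] Frac_neg .
      then show "h (\<sigma>' z) \<ge> 1/8/2" using hj' hz by linarith
    qed
  qed
  have a3: "\<alpha> \<ge> 1/3"
  proof -
    have "- QQ r A T (ptM M z0) / s \<ge> -1" using Qz0 sp by (simp add: field_simps)
    then have "\<alpha> \<ge> exp (-1)" unfolding \<alpha>_def by simp
    moreover have "exp (-1::real) \<ge> 1/3" using exp_le by (simp add: exp_minus field_simps)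
    ultimately show ?thesis by linarith
  qed
  have a4: "\<alpha> / (1 + \<alpha>) \<ge> 1/4" using a3 by (simp add: field_simps)
  have Vnn: "(\<Sum>z\<in>G. g z) \<ge> 0" unfolding g_def by (intro sum_nonneg) auto
  have gain2: "(\<Sum>z\<in>G. g z * (h z)\<^sup>2) \<ge> (\<Sum>z\<in>G. g z) / 1024"
  proof -
    have "(\<Sum>z\<in>G. g z) / 1024 = ((1/8)/2)\<^sup>2 * (1/4) * (\<Sum>z\<in>G. g z)" by (simp add: power2_eq_square)
    also have "\<dots> \<le> ((1/8)/2)\<^sup>2 * (\<alpha> / (1 + \<alpha>)) * (\<Sum>z\<in>G. g z)"
      using a4 Vnn by (intro mult_right_mono mult_left_mono) auto
    finally show ?thesis using gain by linarith
  qed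
  have split: "QQ r A T y = (Frac (vecmat r y A j))\<^sup>2 + QQ r A (T - {j}) y" for y
    unfolding QQ_def using finT jT by (simp add: sum.remove)
  have termb: "exp (- QQ r A (T - {j}) (ptM M z) / s) \<ge> g z + g z * (h z)\<^sup>2 / s" for z
  proof -
    have "- QQ r A (T - {j}) (ptM M z) / s = - QQ r A T (ptM M z) / s + (h z)\<^sup>2 / s"
      unfolding split[of "ptM M z"] h_def u_def by (simp add: diff_divide_distrib add_divide_distrib)
    then have "exp (- QQ r A (T - {j}) (ptM M z) / s) = exp (- QQ r A T (ptM M z) / s + (h z)\<^sup>2 / s)"
      by metis
    also have "\<dots> = g z * exp ((h z)\<^sup>2 / s)"
      unfolding g_def by (rule exp_add)
    finally have "exp (- QQ r A (T - {j}) (ptM M z) / s) = g z * exp ((h z)\<^sup>2 / s)" .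
    also have "\<dots> \<ge> g z * (1 + (h z)\<^sup>2 / s)" unfolding g_def
      by (intro mult_left_mono) auto
    finally show ?thesis by (simp add: algebra_simps)
  qed
  have "VV r M s A (T - {j}) \<ge> (\<Sum>z\<in>G. g z + g z * (h z)\<^sup>2 / s)"
    unfolding VV_def G_def[symmetric] by (intro sum_mono termb)
  also have "(\<Sum>z\<in>G. g z + g z * (h z)\<^sup>2 / s) = (\<Sum>z\<in>G. g z) + (\<Sum>z\<in>G. g z * (h z)\<^sup>2) / s"
    by (simp add: sum.distrib sum_divide_distrib)
  finally have f1: "VV r M s A (T - {j}) \<ge> (\<Sum>z\<in>G. g z) + (\<Sum>z\<in>G. g z * (h z)\<^sup>2) / s" .
  have f2: "((\<Sum>z\<in>G. g z) / 1024) / s \<le> (\<Sum>z\<in>G. g z * (h z)\<^sup>2) / s"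
    using gain2 sp by (intro divide_right_mono) auto
  have "VV r M s A (T - {j}) \<ge> (\<Sum>z\<in>G. g z) + ((\<Sum>z\<in>G. g z) / 1024) / s"
    using f1 f2 by linarith
  moreover have "VV r M s A T = (\<Sum>z\<in>G. g z)" unfolding VV_def G_def g_def ..
  ultimately show ?thesis by (simp add: algebra_simps)
qed

lemma grid_zero: "M \<ge> 1 \<Longrightarrow> (\<lambda>i\<in>{..<r}. 0::nat) \<in> grid r M"
  unfolding grid_def by (simp add: restrict_PiE_iff)

lemma finite_grid: "finite (grid r M)"
  unfolding grid_def by (intro finite_PiE) auto

lemma VV_pos: "M \<ge> 1 \<Longrightarrow> VV r M s A T > 0"
proof -
  assume "M \<ge> 1"
  then have "grid r M \<noteq> {}" using grid_zero[of M r] by blast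
  then show ?thesis unfolding VV_def by (intro sum_pos finite_grid) auto
qed

lemma VV_le: assumes "M \<ge> 1" "s > 0" shows "VV r M s A T \<le> real M ^ r"
proof -
  have "VV r M s A T \<le> (\<Sum>z\<in>grid r M. 1)" unfolding VV_def
  proof (rule sum_mono)
    fix z
    have "- QQ r A T (ptM M z) / s \<le> 0" using QQ_nonneg[of r A T] assms(2)
      by (simp add: divide_nonneg_pos)
    then show "exp (- QQ r A T (ptM M z) / s) \<le> 1" by simp
  qed
  also have "\<dots> = real (card (grid r M))" by simp
  also have "card (grid r M) = M ^ r" unfolding grid_def by (simp add: card_PiE)
  finally show ?thesis by simp
qed

lemma VV_ge1: assumes "M \<ge> 1" shows "VV r M s A T \<ge> 1"
proof -
  define z00 where "z00 = (\<lambda>i\<in>{..<r}. 0::nat)"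
  have zin: "z00 \<in> grid r M" unfolding z00_def using grid_zero[OF assms] .
  have "vecmat r (ptM M z00) A k = 0" for k
    unfolding vecmat_def ptM_def z00_def by simp
  then have q0: "QQ r A T (ptM M z00) = 0" unfolding QQ_def by (simp add: Frac_zero)
  have e1: "exp (- QQ r A T (ptM M z00) / s) = 1" unfolding q0 by simp
  have "exp (- QQ r A T (ptM M z00) / s) \<le> VV r M s A T" unfolding VV_def
    by (rule member_le_sum[OF zin _ finite_grid]) simp
  then show ?thesis unfolding e1 .
qed

lemma main_lemma:
  fixes n r M :: nat and s B :: real and A :: "nat \<Rightarrow> nat \<Rightarrow> int"
  assumes s1: "s \<ge> 1" and Bpos: "B > 0"
    and Abd: "\<forall>i<r. \<forall>j<n. \<bar>real_of_int (A i j)\<bar> \<le> B"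
    and Mpos: "M \<ge> 1" and Mbig: "8 * real n * real r * B \<le> real M"
  shows "\<exists>S \<subseteq> {..<n}. real (card S) * ln (1 + 1/(2048*s)) \<le> real r * ln (real M) \<and>
          (\<forall>y::nat \<Rightarrow> real. \<forall>j<n. (Frac (vecmat r y (zero_cols A S) j))\<^sup>2
              \<le> (1/s) * (\<Sum>k<n. (Frac (vecmat r y (zero_cols A S) k))\<^sup>2))"
proof -
  define J where "J = {..<n::nat}"
  define \<beta> where "\<beta> = 1 + 1/(2048*s)"
  define P where "P T = VV r M s A T / \<beta> ^ card (J - T)" for T
  have sp: "s > 0" using s1 by simp
  have b0: "1/(2048*s) > 0" using sp by simp
  have bpos: "\<beta> > 0" using b0 unfolding \<beta>_def by linarith
  have b1: "\<beta> \<ge> 1" using b0 unfolding \<beta>_def by linarith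
  have finJ: "finite J" unfolding J_def by simp
  have "finite (P ` Pow J)" "P ` Pow J \<noteq> {}" using finJ by auto
  then have "Max (P ` Pow J) \<in> P ` Pow J" by (rule Max_in)
  then obtain T where TJ: "T \<in> Pow J" and Tmax0: "P T = Max (P ` Pow J)" by auto
  have Tmax: "P T' \<le> P T" if "T' \<in> Pow J" for T'
    unfolding Tmax0 using that \<open>finite (P ` Pow J)\<close> by (intro Max_ge) auto
  define S where "S = J - T"
  have TsubJ: "T \<subseteq> J" using TJ by auto
  have finT: "finite T" using TsubJ finJ finite_subset by blast
  have SJ: "S \<subseteq> {..<n}" unfolding S_def J_def by auto
  have bound: "real (card S) * ln \<beta> \<le> real r * ln (real M)"
  proof -
    have "P J \<le> P T" using Tmax by auto
    moreover have "P J = VV r M s A J" unfolding P_def by simp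
    ultimately have "1 \<le> VV r M s A T / \<beta> ^ card S"
      using VV_ge1[OF Mpos, of r s A J] unfolding P_def S_def by linarith
    then have "\<beta> ^ card S \<le> VV r M s A T" using bpos by (simp add: field_simps)
    also have "\<dots> \<le> real M ^ r" by (rule VV_le[OF Mpos sp])
    finally have le: "\<beta> ^ card S \<le> real M ^ r" .
    have "ln (\<beta> ^ card S) \<le> ln (real M ^ r)"
      using le bpos Mpos by (subst ln_le_cancel_iff) auto
    then show ?thesis by (simp add: ln_realpow)
  qed
  have vz: "vecmat r y (zero_cols A S) k = (if k \<in> S then 0 else vecmat r y A k)" for y k
    unfolding vecmat_def zero_cols_def by simp
  have sumeq: "(\<Sum>k<n. (Frac (vecmat r y (zero_cols A S) k))\<^sup>2) = QQ r A T y" for y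
  proof -
    have "(\<Sum>k<n. (Frac (vecmat r y (zero_cols A S) k))\<^sup>2)
        = (\<Sum>k\<in>J. if k \<in> T then (Frac (vecmat r y A k))\<^sup>2 else 0)"
      unfolding J_def[symmetric]
    proof (rule sum.cong)
      fix k assume kJ: "k \<in> J"
      have memS: "k \<in> S \<longleftrightarrow> k \<notin> T" unfolding S_def using kJ by auto
      show "(Frac (vecmat r y (zero_cols A S) k))\<^sup>2 = (if k \<in> T then (Frac (vecmat r y A k))\<^sup>2 else 0)"
        unfolding vz using memS by (simp add: Frac_zero)
    qed simp
    also have "\<dots> = (\<Sum>k\<in>J \<inter> T. (Frac (vecmat r y A k))\<^sup>2)"
      using finJ by (simp add: sum.inter_restrict)
    also have "J \<inter> T = T" using TsubJ by auto
    finally show ?thesis unfolding QQ_def .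
  qed
  have propk: "(Frac (vecmat r y (zero_cols A S) j))\<^sup>2
              \<le> (1/s) * (\<Sum>k<n. (Frac (vecmat r y (zero_cols A S) k))\<^sup>2)" if jn: "j < n" for y j
  proof (cases "j \<in> S")
    case True
    then show ?thesis unfolding sumeq using QQ_nonneg[of r A T y] sp
      by (simp add: vz Frac_zero)
  next
    case False
    then have jT: "j \<in> T" using jn unfolding S_def J_def by auto
    show ?thesis
    proof (rule ccontr)
      assume "\<not> ?thesis"
      then have "(1/s) * QQ r A T y < (Frac (vecmat r y A j))\<^sup>2" unfolding sumeq using vz False by auto
      then have viol: "QQ r A T y < s * (Frac (vecmat r y A j))\<^sup>2" using sp by (simp add: field_simps)
      have "T \<subseteq> {..<n}" using TsubJ unfolding J_def .
      from witness[OF s1 Bpos Abd Mpos Mbig this jT viol[unfolded QQ_def]]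
      obtain z0 where z0: "z0 \<in> grid r M" "\<bar>Frac (vecmat r (ptM M z0) A j)\<bar> \<ge> 1/8"
        "QQ r A T (ptM M z0) \<le> s"
        unfolding grid_def ptM_def QQ_def by blast
      have inc: "VV r M s A (T - {j}) \<ge> (1 + 1 / (1024 * s)) * VV r M s A T"
        by (rule increase[OF s1 Mpos finT jT z0])
      have cardeq: "card (J - (T - {j})) = Suc (card S)"
      proof -
        have "J - (T - {j}) = insert j (J - T)" using jT TsubJ by auto
        moreover have "j \<notin> J - T" using jT by auto
        ultimately show ?thesis unfolding S_def using finJ by simp
      qed
      have Vp: "VV r M s A T > 0" by (rule VV_pos[OF Mpos])
      have "P T = VV r M s A T / \<beta> ^ card S" unfolding P_def S_def ..
      also have "\<dots> < (1 + 1 / (1024 * s)) * VV r M s A T / (\<beta> * \<beta> ^ card S)"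
      proof -
        have "\<beta> < 1 + 1 / (1024 * s)" unfolding \<beta>_def using sp by (simp add: field_simps)
        then have "\<beta> * VV r M s A T < (1 + 1 / (1024 * s)) * VV r M s A T"
          using Vp by (intro mult_strict_right_mono) auto
        moreover have "\<beta> ^ card S > 0" using bpos by simp
        ultimately show ?thesis using bpos Vp by (simp add: field_simps)
      qed
      also have "\<dots> \<le> VV r M s A (T - {j}) / (\<beta> * \<beta> ^ card S)"
        using inc bpos by (intro divide_right_mono) auto
      also have "\<dots> = P (T - {j})" unfolding P_def cardeq by simp
      finally have "P T < P (T - {j})" .
      moreover have "P (T - {j}) \<le> P T" using TsubJ by (intro Tmax) auto
      ultimately show False by linarith
    qed
  qed
  show ?thesis using SJ bound propk unfolding \<beta>_def by blast
qed

lemma ln_n_lower: assumes "(n::nat) \<ge> 2" shows "ln (real n) \<ge> 1/4"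
proof -
  have "(1/2::real) - (1/2)\<^sup>2 \<le> ln (1 + 1/2)" by (rule ln_one_plus_pos_lower_bound) auto
  moreover have "ln (1 + 1/2::real) \<le> ln (real n)" using assms by (subst ln_le_cancel_iff) auto
  ultimately show ?thesis by (simp add: power2_eq_square)
qed

lemma lnM_bound:
  fixes n r :: nat and c :: real
  assumes n2: "n \<ge> 2" and rn: "r < n"
  defines "M \<equiv> nat \<lceil>8 * real n * real r * (real n powr c)\<rceil> + 1"
  shows "ln (real M) \<le> (6 + max c 0) * ln (real n)"
proof -
  define B where "B = real n powr c"
  define Pc where "Pc = real n powr (max c 0)"
  have n1: "real n \<ge> 1" using n2 by simp
  have Bpos: "B > 0" unfolding B_def using n2 by simp
  have BP: "B \<le> Pc" unfolding B_def Pc_def using n1 by (intro powr_mono) auto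
  have P1: "Pc \<ge> 1" unfolding Pc_def using n1 by (intro ge_one_powr_ge_zero) auto
  have x0: "8 * real n * real r * B \<ge> 0" using Bpos by simp
  have "real M = real (nat \<lceil>8 * real n * real r * B\<rceil>) + 1" unfolding M_def B_def by simp
  also have "real (nat \<lceil>8 * real n * real r * B\<rceil>) = of_int \<lceil>8 * real n * real r * B\<rceil>"
    using x0 by simp
  finally have "real M \<le> 8 * real n * real r * B + 2" by linarith
  also have "\<dots> \<le> 8 * real n * real n * Pc + 2"
  proof -
    have "real r \<le> real n" using rn by simp
    then have "real n * real r \<le> real n * real n" by (intro mult_left_mono) auto
    then have "real n * real r * B \<le> real n * real n * Pc" using Bpos BP rn
      by (intro mult_mono) auto
    then show ?thesis by simp
  qed
  also have "\<dots> \<le> 10 * (real n * real n * Pc)"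
  proof -
    have "real n * real n \<ge> 1" using n1 by (metis mult_mono' mult_1 zero_le_one)
    then have "real n * real n * Pc \<ge> 1" using P1 by (metis mult_mono' mult_1 zero_le_one)
    then show ?thesis by (simp only: mult.assoc)
  qed
  finally have Mle: "real M \<le> 10 * (real n * real n * Pc)" .
  have "M > 0" unfolding M_def by simp
  then have Mpos: "real M > 0" by simp
  have "ln (real M) \<le> ln (10 * (real n * real n * Pc))"
    using Mle Mpos by (subst ln_le_cancel_iff) auto
  also have "\<dots> = ln 10 + (ln (real n) + ln (real n)) + max c 0 * ln (real n)"
    using n1 P1 unfolding Pc_def by (simp add: ln_mult)
  also have "ln (10::real) \<le> 4 * ln (real n)"
  proof -
    have "(10::real) \<le> real n ^ 4"
    proof -
      have "(2::real) ^ 4 \<le> real n ^ 4" using n2 by (intro power_mono) auto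
      then show ?thesis by simp
    qed
    then have "ln (10::real) \<le> ln (real n ^ 4)" using n1 by (subst ln_le_cancel_iff) auto
    then show ?thesis by (simp add: ln_realpow)
  qed
  finally show ?thesis by (simp add: algebra_simps)
qed

theorem mainTheorem5:
  fixes c :: real
  shows "\<exists>C::real. \<forall>(n::nat) (r::nat) (s::real) (A::nat \<Rightarrow> nat \<Rightarrow> int).
           n \<ge> 2 \<longrightarrow> s \<ge> 1 \<longrightarrow>
           (\<forall>i<r. \<forall>j<n. \<bar>real_of_int (A i j)\<bar> \<le> real n powr c) \<longrightarrow>
           (\<exists>S \<subseteq> {..<n}. real (card S) \<le> C * real r * s * ln (real n) \<and>
              (\<forall>y::nat \<Rightarrow> real. \<forall>j<n.
                 (Frac (vecmat r y (zero_cols A S) j))\<^sup>2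
                   \<le> (1 / s) * (\<Sum>k<n. (Frac (vecmat r y (zero_cols A S) k))\<^sup>2)))"
proof -
  define C where "C = 4096 * (6 + max c 0) + 2"
  have C0: "C \<ge> 4096 * (6 + max c 0)" unfolding C_def by simp
  show ?thesis
  proof (rule exI[of _ C], intro allI impI)
    fix n r :: nat and s :: real and A :: "nat \<Rightarrow> nat \<Rightarrow> int"
    assume n2: "n \<ge> 2" and s1: "s \<ge> 1"
      and Abd: "\<forall>i<r. \<forall>j<n. \<bar>real_of_int (A i j)\<bar> \<le> real n powr c"
    have sp: "s > 0" using s1 by simp
    have lnn: "ln (real n) \<ge> 1/4" by (rule ln_n_lower[OF n2])
    have cp0: "max c 0 \<ge> 0" by simp
    show "\<exists>S \<subseteq> {..<n}. real (card S) \<le> C * real r * s * ln (real n) \<and>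
              (\<forall>y::nat \<Rightarrow> real. \<forall>j<n.
                 (Frac (vecmat r y (zero_cols A S) j))\<^sup>2
                   \<le> (1 / s) * (\<Sum>k<n. (Frac (vecmat r y (zero_cols A S) k))\<^sup>2))"
    proof (cases "r \<ge> n")
      case True
      define S where "S = {..<n}"
      have v0: "vecmat r y (zero_cols A S) k = 0" if "k < n" for y k
        using that unfolding vecmat_def zero_cols_def S_def by simp
      have "real (card S) = real n" unfolding S_def by simp
      also have "\<dots> \<le> real r" using True by simp
      also have "\<dots> \<le> C * real r * s * ln (real n)"
      proof -
        have "C * ln (real n) \<ge> 1"
        proof -
          have "4096 * (6 + max c 0) \<ge> 4096 * 6" using cp0 by simp
          then have "C \<ge> 4" using C0 by linarith
          then have "C * ln (real n) \<ge> 4 * (1/4)" using lnn by (intro mult_mono) auto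
          then show ?thesis by simp
        qed
        then have "C * ln (real n) * s \<ge> 1 * 1" using s1 by (intro mult_mono) auto
        then have "real r * (C * ln (real n) * s) \<ge> real r * 1" by (intro mult_left_mono) auto
        then show ?thesis by (simp add: algebra_simps)
      qed
      finally show ?thesis using v0 unfolding S_def by (auto simp: Frac_zero)
    next
      case False
      then have rn: "r < n" by simp
      define B where "B = real n powr c"
      define M where "M = nat \<lceil>8 * real n * real r * (real n powr c)\<rceil> + 1"
      have Bpos: "B > 0" unfolding B_def using n2 by simp
      have Mpos: "M \<ge> 1" unfolding M_def by simp
      have Mbig: "8 * real n * real r * B \<le> real M"
      proof -
        have "8 * real n * real r * B \<le> of_int \<lceil>8 * real n * real r * B\<rceil>" by (rule le_of_int_ceiling)
        also have "\<dots> \<le> real (nat \<lceil>8 * real n * real r * B\<rceil>)" by simp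
        also have "\<dots> \<le> real M" unfolding M_def B_def by simp
        finally show ?thesis .
      qed
      have lnM: "ln (real M) \<le> (6 + max c 0) * ln (real n)"
        unfolding M_def by (rule lnM_bound[OF n2 rn])
      have lnM0: "ln (real M) \<ge> 0" using Mpos by simp
      obtain S where SJ: "S \<subseteq> {..<n}"
        and bd: "real (card S) * ln (1 + 1/(2048*s)) \<le> real r * ln (real M)"
        and pr: "\<forall>y::nat \<Rightarrow> real. \<forall>j<n. (Frac (vecmat r y (zero_cols A S) j))\<^sup>2
              \<le> (1/s) * (\<Sum>k<n. (Frac (vecmat r y (zero_cols A S) k))\<^sup>2)"
        using main_lemma[OF s1 Bpos Abd[folded B_def] Mpos Mbig] by blast
      define x where "x = 1/(2048*s)"
      have x0: "x > 0" and x1: "x \<le> 1/2" unfolding x_def using s1 by (auto simp: field_simps)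
      have "x - x\<^sup>2 \<le> ln (1 + x)" using x0 x1 by (intro ln_one_plus_pos_lower_bound) auto
      moreover have "x\<^sup>2 \<le> x / 2" using x0 x1 by (simp add: power2_eq_square mult_left_le_one_le field_simps)
      ultimately have lnb: "ln (1 + x) \<ge> x / 2" by linarith
      have "real (card S) * (x / 2) \<le> real r * ln (real M)"
        using bd lnb unfolding x_def[symmetric]
        by (meson mult_left_mono of_nat_0_le_iff order_trans)
      then have "real (card S) \<le> real r * ln (real M) * (2 / x)" using x0
        by (simp add: field_simps)
      also have "2 / x = 4096 * s" unfolding x_def by simp
      also have "real r * ln (real M) * (4096 * s) \<le> real r * ((6 + max c 0) * ln (real n)) * (4096 * s)"
        using lnM sp by (intro mult_right_mono mult_left_mono) auto
      also have "\<dots> = (4096 * (6 + max c 0)) * real r * s * ln (real n)" by (simp add: algebra_simps)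
      also have "\<dots> \<le> C * real r * s * ln (real n)"
      proof -
        have "real r * s * ln (real n) \<ge> 0" using sp lnn by simp
        then show ?thesis using C0 by (simp add: mult.assoc mult_right_mono)
      qed
      finally show ?thesis using SJ pr by blast
    qed
  qed
qed

end
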